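(* Let $B\ge 2$ and $\eta\in\mathbb{N}$. Then $\alpha_{\eta+1}\le 2B$, i.e. $\gamma_B(\eta+1)$ has at most $2B$ base-$B$ digits different from $B-1$.
   Context: Fix an integer base $B \geq 2$. Every integer $x>0$ is written uniquely as $x=\sum_{i=0}^{L(x)-1} x_i B^i$ with digits $0 \le x_i \le B-1$ and $x_{L(x)-1}\neq 0$. Define $\mathcal{H}_B(x)=\sum_{i=0}^{L(x)-1} x_i^2$, $\mathcal{H}_B(0)=0$, $\mathcal{H}_B^0(x)=x$, $\mathcal{H}_B^{n}=\mathcal{H}_B\circ\mathcal{H}_B^{n-1}$. A positive integer $x$ is happy if $\mathcal{H}_B^n(x)=1$ for some $n\in\mathbb{N}$; its height is $\eta_B(x)=\min\{\alpha\in\mathbb{N}:\mathcal{H}_B^\alpha(x)=1\}$. For $n\in\mathbb{N}$, $\gamma_B(n)$ denotes the smallest happy number $x\ge 1$ with $\eta_B(x)=n$. For each $n$, $L_n=L(\gamma_B(n))$ is the number of base-$B$ digits of $\gamma_B(n)$, $t_n$ is the number of those digits equal to $B-1$, and $\alpha_n=L_n-t_n$ is the number of digits smaller than $B-1$. *)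

theory Defs
  imports Main
begin

function digits :: "nat \<Rightarrow> nat \<Rightarrow> nat list" where
  "digits B x = (if B < 2 \<or> x = 0 then [] else x mod B # digits B (x div B))"
  by auto
termination by (relation "measure (\<lambda>(B, x). x)") auto

declare digits.simps[simp del]

definition H :: "nat \<Rightarrow> nat \<Rightarrow> nat" where
  "H B x = (\<Sum>d\<leftarrow>digits B x. d ^ 2)"

definition happy :: "nat \<Rightarrow> nat \<Rightarrow> bool" where
  "happy B x \<longleftrightarrow> x > 0 \<and> (\<exists>n. (H B ^^ n) x = 1)"

definition height :: "nat \<Rightarrow> nat \<Rightarrow> nat" where
  "height B x = (LEAST a. (H B ^^ a) x = 1)"

definition gamma :: "nat \<Rightarrow> nat \<Rightarrow> nat" where
  "gamma B n = (LEAST x. x \<ge> 1 \<and> happy B x \<and> height B x = n)"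

definition alpha :: "nat \<Rightarrow> nat \<Rightarrow> nat" where
  "alpha B n = length (filter (\<lambda>d. d < B - 1) (digits B (gamma B n)))"

end

theory Submission
  imports Defs "HOL-Number_Theory.Number_Theory"
begin


definition fsq :: "int \<Rightarrow> bool" where
  "fsq n \<longleftrightarrow> (\<exists>a b c d::int. n = a^2 + b^2 + c^2 + d^2)"

lemma euler4:
  fixes x1 x2 x3 x4 y1 y2 y3 y4 :: int
  shows "(x1^2+x2^2+x3^2+x4^2)*(y1^2+y2^2+y3^2+y4^2) =
    (x1*y1+x2*y2+x3*y3+x4*y4)^2 + (x1*y2 - x2*y1 + x3*y4 - x4*y3)^2
    + (x1*y3 - x3*y1 - x2*y4 + x4*y2)^2 + (x1*y4 - x4*y1 + x2*y3 - x3*y2)^2"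
  by (simp add: power2_eq_square algebra_simps)

lemma fsq_mult: "fsq a \<Longrightarrow> fsq b \<Longrightarrow> fsq (a*b)"
  unfolding fsq_def using euler4 by metis

lemma sq_pigeon:
  fixes p :: nat
  assumes "prime p" "odd p"
  shows "\<exists>x y. x \<le> (p-1) div 2 \<and> y \<le> (p-1) div 2 \<and> p dvd x^2 + y^2 + 1"
proof -
  define h where "h = (p - 1) div 2"
  have p2: "p \<ge> 2" using assms prime_ge_2_nat by blast
  have ph: "2*h + 1 = p" using assms(2) p2 unfolding h_def by presburger
  define f where "f = (\<lambda>x::nat. x^2 mod p)"
  define g where "g = (\<lambda>y::nat. p - 1 - y^2 mod p)"
  have injf: "inj_on f {0..h}"
  proof (rule inj_onI)
    fix x y assume xy: "x \<in> {0..h}" "y \<in> {0..h}" "f x = f y"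
    have "int (x^2) mod int p = int (y^2) mod int p" using xy(3) unfolding f_def
      by (simp only: zmod_int[symmetric])
    hence "(int p) dvd int (x^2) - int (y^2)" by (simp only: mod_eq_dvd_iff)
    hence "(int p) dvd (int x)^2 - (int y)^2" by simp
    hence "(int p) dvd (int x - int y) * (int x + int y)"
      by (simp add: power2_eq_square algebra_simps)
    hence d: "(int p) dvd (int x - int y) \<or> (int p) dvd (int x + int y)"
      using assms(1) by (simp add: prime_dvd_mult_iff prime_nat_iff_prime)
    have b1: "\<bar>int x - int y\<bar> < int p" using xy ph by auto
    have b2: "int x + int y < int p" using xy ph by auto
    show "x = y"
    proof (cases "(int p) dvd (int x - int y)")
      case True
      show ?thesis
      proof (rule ccontr)
        assume "x \<noteq> y"
        hence "int x - int y \<noteq> 0" by simp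
        from dvd_imp_le_int[OF this True] b1 show False by simp
      qed
    next
      case False
      then have "(int p) dvd (int x + int y)" using d by blast
      then have "int x + int y = 0"
      proof (rule contrapos_pp)
        assume "int x + int y \<noteq> 0"
        show "\<not> int p dvd int x + int y"
        proof
          assume "int p dvd int x + int y"
          from dvd_imp_le_int[OF \<open>int x + int y \<noteq> 0\<close> this] b2 show False by simp
        qed
      qed
      then show ?thesis by simp
    qed
  qed
  have injg: "inj_on g {0..h}"
  proof (rule inj_onI)
    fix x y assume xy: "x \<in> {0..h}" "y \<in> {0..h}" "g x = g y"
    have "x^2 mod p < p" "y^2 mod p < p" using p2 by auto
    hence "f x = f y" using xy(3) unfolding g_def f_def by linarith
    thus "x = y" by (rule inj_onD[OF injf _ xy(1) xy(2)])
  qed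
  have cf: "card (f ` {0..h}) = h + 1" using card_image[OF injf] by simp
  have cg: "card (g ` {0..h}) = h + 1" using card_image[OF injg] by simp
  have sub: "f ` {0..h} \<union> g ` {0..h} \<subseteq> {0..<p}"
    unfolding f_def g_def using p2 by (auto simp del: atLeastAtMost_iff)
  have "f ` {0..h} \<inter> g ` {0..h} \<noteq> {}"
  proof
    assume e: "f ` {0..h} \<inter> g ` {0..h} = {}"
    have "card (f ` {0..h} \<union> g ` {0..h}) = 2*h+2"
      using card_Un_disjoint[OF _ _ e] cf cg by simp
    moreover have "card (f ` {0..h} \<union> g ` {0..h}) \<le> p"
      using card_mono[OF _ sub] by simp
    ultimately show False using ph by simp
  qed
  then obtain x y where xy: "x \<le> h" "y \<le> h" "f x = g y" by auto
  have lt: "y^2 mod p < p" using p2 by simp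
  have "x^2 mod p + y^2 mod p + 1 = p"
    using xy(3) lt unfolding f_def g_def by linarith
  hence A: "(x^2 mod p + y^2 mod p + 1) mod p = 0" by simp
  have B: "(x^2 + y^2 + 1) mod p = ((x^2 + y^2) mod p + 1) mod p" by (rule mod_add_left_eq[symmetric])
  have C: "(x^2+y^2) mod p = (x^2 mod p + y^2 mod p) mod p" by (rule mod_add_eq[symmetric])
  have D: "((x^2 mod p + y^2 mod p) mod p + 1) mod p = (x^2 mod p + y^2 mod p + 1) mod p" by (rule mod_add_left_eq)
  have "(x^2 + y^2 + 1) mod p = 0" by (simp only: B C D A)
  thus ?thesis using xy unfolding h_def by auto
qed


lemma red_props:
  fixes M z :: int
  assumes "M > 0"
  shows "2 * \<bar>z - M * ((z + (M-1) div 2) div M)\<bar> \<le> M"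
proof -
  define c where "c = (M-1) div 2"
  have c1: "2 * c + (M-1) mod 2 = M - 1" unfolding c_def by (rule mult_div_mod_eq)
  have c2: "0 \<le> (M-1) mod 2" "(M-1) mod 2 < 2" by simp_all
  have e0: "M * ((z + c) div M) + (z + c) mod M = z + c" by (rule mult_div_mod_eq)
  have m: "0 \<le> (z + c) mod M" "(z + c) mod M < M" using assms by simp_all
  define q where "q = (z + c) div M"
  define r where "r = (z + c) mod M"
  have "z - M * q = r - c" using e0 unfolding q_def r_def by linarith
  moreover have "2 * \<bar>r - c\<bar> \<le> M"
  proof -
    obtain k where k: "2 * c + k = M - 1" "0 \<le> k" "k < 2" using c1 c2 by blast
    have r0: "0 \<le> r" "r < M" using m unfolding r_def by simp_all
    have "r \<le> M - 1" "k \<le> 1" using r0 k by simp_all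
    hence "2*(r-c) \<le> M" using r0 k by presburger
    moreover have "2*(c-r) \<le> M" using r0 k by presburger
    ultimately show ?thesis by (simp add: abs_if)
  qed
  ultimately have "2 * \<bar>z - M * q\<bar> \<le> M" by simp
  hence "2 * \<bar>z - M * ((z + c) div M)\<bar> \<le> M" unfolding q_def .
  then show ?thesis unfolding c_def .
qed

lemma four_le:
  fixes M y :: int
  assumes "2 * \<bar>y\<bar> \<le> M"
  shows "4 * y^2 \<le> M^2"
proof -
  have "(2*\<bar>y\<bar>)^2 \<le> M^2" using assms by (intro power_mono) auto
  moreover have "(2*\<bar>y\<bar>)^2 = 4 * y^2" by (simp add: power_mult_distrib)
  ultimately show ?thesis by simp
qed

lemma descent:
  fixes p m :: nat and x1 x2 x3 x4 :: int
  assumes p: "prime p" and m: "1 < m" "m < p"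
    and eq: "int m * int p = x1^2+x2^2+x3^2+x4^2"
  shows "\<exists>r. 0 < r \<and> r < m \<and> fsq (int r * int p)"
proof -
  define M where "M = int m"
  have M0: "M > 1" using m unfolding M_def by simp
  define t where "t = (\<lambda>z. (z + (M-1) div 2) div M)"
  define y where "y = (\<lambda>z. z - M * t z)"
  have yb: "4 * (y z)^2 \<le> M^2" for z
    using red_props[of M z] M0 four_le unfolding y_def t_def by auto
  define y1 where "y1 = y x1"
  define y2 where "y2 = y x2"
  define y3 where "y3 = y x3"
  define y4 where "y4 = y x4"
  define t1 where "t1 = t x1"
  define t2 where "t2 = t x2"
  define t3 where "t3 = t x3"
  define t4 where "t4 = t x4"
  have xs: "x1 = y1 + M*t1" "x2 = y2 + M*t2" "x3 = y3 + M*t3" "x4 = y4 + M*t4"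
    unfolding y1_def y2_def y3_def y4_def t1_def t2_def t3_def t4_def y_def by auto
  have eq': "M * int p = x1^2+x2^2+x3^2+x4^2" using eq M_def by simp
  have "x1^2+x2^2+x3^2+x4^2 = (y1^2+y2^2+y3^2+y4^2)
        + M * (2*y1*t1 + 2*y2*t2 + 2*y3*t3 + 2*y4*t4 + M*(t1^2+t2^2+t3^2+t4^2))"
    unfolding xs by (simp add: power2_eq_square algebra_simps)
  hence "y1^2+y2^2+y3^2+y4^2 = M * (int p - (2*y1*t1 + 2*y2*t2 + 2*y3*t3 + 2*y4*t4 + M*(t1^2+t2^2+t3^2+t4^2)))"
    using eq' by (simp add: algebra_simps)
  hence "M dvd (y1^2+y2^2+y3^2+y4^2)" by (metis dvd_triv_left)
  then obtain R where R: "y1^2+y2^2+y3^2+y4^2 = M * R" by blast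
  have R0: "R \<ge> 0"
  proof -
    have "M * R \<ge> 0" using R[symmetric] by simp
    thus ?thesis using M0 by (simp add: zero_le_mult_iff)
  qed
  have "4 * (M * R) \<le> 4 * M^2" using yb[of x1] yb[of x2] yb[of x3] yb[of x4] R
    unfolding y1_def y2_def y3_def y4_def by linarith
  hence RM: "R \<le> M" using M0 by (simp add: power2_eq_square)
  show ?thesis
  proof (cases "R = 0 \<or> R = M")
    case True
    have ys: "4*y1^2 \<le> M^2" "4*y2^2 \<le> M^2" "4*y3^2 \<le> M^2" "4*y4^2 \<le> M^2"
      using yb unfolding y1_def y2_def y3_def y4_def by auto
    have dv: "M dvd 2 * yi" if "yi \<in> {y1,y2,y3,y4}" for yi
    proof (cases "R = 0")
      case True
      then have "y1^2+y2^2+y3^2+y4^2 = 0" using R by simp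
      then have "yi = 0" using that by (auto simp: sum_power2_eq_zero_iff add_nonneg_eq_0_iff)
      then show ?thesis by simp
    next
      case False
      then have "R = M" using \<open>R = 0 \<or> R = M\<close> by simp
      then have "4*(y1^2+y2^2+y3^2+y4^2) = 4 * M^2" using R by (simp add: power2_eq_square)
      then have "4*yi^2 = M^2" using that ys by auto
      then have "(2*yi)^2 = M^2" by (simp add: power_mult_distrib)
      then have "\<bar>2*yi\<bar> = M" using M0
        by (metis abs_of_pos order_less_trans power2_eq_iff zero_less_one abs_minus_cancel)
      then show ?thesis by (metis abs_dvd_iff dvd_refl)
    qed
    obtain s1 where s1: "2*y1 = M*s1" using dv[of y1] by auto
    obtain s2 where s2: "2*y2 = M*s2" using dv[of y2] by auto
    obtain s3 where s3: "2*y3 = M*s3" using dv[of y3] by auto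
    obtain s4 where s4: "2*y4 = M*s4" using dv[of y4] by auto
    have "x1^2+x2^2+x3^2+x4^2 = (y1^2+y2^2+y3^2+y4^2)
        + M * (2*y1*t1 + 2*y2*t2 + 2*y3*t3 + 2*y4*t4) + M*M*(t1^2+t2^2+t3^2+t4^2)"
      unfolding xs by (simp add: power2_eq_square algebra_simps)
    also have "\<dots> = M * R + M*M*(s1*t1+s2*t2+s3*t3+s4*t4) + M*M*(t1^2+t2^2+t3^2+t4^2)"
      using R s1 s2 s3 s4 by (simp add: algebra_simps)
    finally have "M*M dvd x1^2+x2^2+x3^2+x4^2" using True
      by (auto simp: algebra_simps)
    hence "M * M dvd M * int p" using eq' by simp
    hence "M dvd int p" using M0 by simp
    hence "m dvd p" unfolding M_def by simp
    hence "m = 1 \<or> m = p" using p by (simp add: prime_nat_iff)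
    thus ?thesis using m by simp
  next
    case False
    hence R1: "0 < R" "R < M" using R0 RM by auto
    define w1 where "w1 = int p - (x1*t1+x2*t2+x3*t3+x4*t4)"
    define w2 where "w2 = - x1*t2 + x2*t1 - x3*t4 + x4*t3"
    define w3 where "w3 = - x1*t3 + x3*t1 + x2*t4 - x4*t2"
    define w4 where "w4 = - x1*t4 + x4*t1 - x2*t3 + x3*t2"
    have ys: "y1 = x1 - M*t1" "y2 = x2 - M*t2" "y3 = x3 - M*t3" "y4 = x4 - M*t4"
      using xs by auto
    have z1: "x1*y1+x2*y2+x3*y3+x4*y4 = M * w1"
      unfolding ys w1_def using eq' by (simp add: power2_eq_square algebra_simps)
    have z2: "x1*y2 - x2*y1 + x3*y4 - x4*y3 = M * w2"
      unfolding ys w2_def by (simp add: algebra_simps)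
    have z3: "x1*y3 - x3*y1 - x2*y4 + x4*y2 = M * w3"
      unfolding ys w3_def by (simp add: algebra_simps)
    have z4: "x1*y4 - x4*y1 + x2*y3 - x3*y2 = M * w4"
      unfolding ys w4_def by (simp add: algebra_simps)
    have "(M * int p) * (M * R) = (M*w1)^2 + (M*w2)^2 + (M*w3)^2 + (M*w4)^2"
      using euler4[of x1 x2 x3 x4 y1 y2 y3 y4] eq' R z1 z2 z3 z4 by simp
    hence "(M*M) * (R * int p) = (M*M) * (w1^2+w2^2+w3^2+w4^2)"
      by (simp add: power2_eq_square algebra_simps)
    hence "R * int p = w1^2+w2^2+w3^2+w4^2" using M0 by simp
    hence "fsq (int (nat R) * int p)" unfolding fsq_def using R0 by auto
    moreover have "0 < nat R" "nat R < m" using R1 M_def by auto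
    ultimately show ?thesis by blast
  qed
qed


lemma prime_fsq:
  fixes p :: nat
  assumes p: "prime p"
  shows "fsq (int p)"
proof (cases "p = 2")
  case True
  then show ?thesis unfolding fsq_def by (rule_tac x=1 in exI, rule_tac x=1 in exI, auto)
next
  case False
  have p2: "p \<ge> 2" using p prime_ge_2_nat by blast
  have odd: "odd p" using p False prime_odd_nat p2 by auto
  obtain x y where xy: "x \<le> (p-1) div 2" "y \<le> (p-1) div 2" "p dvd x^2 + y^2 + 1"
    using sq_pigeon[OF p odd] by blast
  then obtain m0 where m0: "x^2 + y^2 + 1 = p * m0" by blast
  have "4*x^2 \<le> (p-1)^2" "4*y^2 \<le> (p-1)^2"
  proof -
    have "2*x \<le> p-1" "2*y \<le> p-1" using xy by auto
    hence "(2*x)^2 \<le> (p-1)^2" "(2*y)^2 \<le> (p-1)^2" using power_mono by blast+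
    thus "4*x^2 \<le> (p-1)^2" "4*y^2 \<le> (p-1)^2" by (auto simp: power_mult_distrib)
  qed
  hence "4*(x^2+y^2+1) \<le> 2*(p-1)^2 + 4" by simp
  also have "\<dots> < 4 * p^2"
  proof -
    have "(p-1)^2 \<le> p^2" by (rule power_mono) auto
    moreover have "2*2 \<le> p*p" using p2 by (intro mult_mono) auto
    ultimately show ?thesis by (simp add: power2_eq_square)
  qed
  finally have "x^2+y^2+1 < p^2" by simp
  hence "p * m0 < p * p" using m0 by (simp add: power2_eq_square)
  hence m0p: "m0 < p" by simp
  have m0pos: "m0 > 0" using m0 by (cases m0) auto
  define S where "S = {m::nat. 0 < m \<and> fsq (int m * int p)}"
  have "int (x^2 + y^2 + 1) = int (p * m0)" using m0 by simp
  hence "int m0 * int p = (int x)^2 + (int y)^2 + 1^2 + 0^2" by (simp add: mult.commute)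
  hence "m0 \<in> S" unfolding S_def fsq_def using m0pos by blast
  define m1 where "m1 = (LEAST m. m \<in> S)"
  have m1S: "m1 \<in> S" unfolding m1_def using \<open>m0 \<in> S\<close> by (rule LeastI)
  have m1le: "m1 \<le> m0" unfolding m1_def using \<open>m0 \<in> S\<close> by (rule Least_le)
  have "m1 = 1"
  proof (rule ccontr)
    assume "m1 \<noteq> 1"
    hence "1 < m1" using m1S unfolding S_def by auto
    moreover obtain a b c d where "int m1 * int p = a^2+b^2+c^2+d^2"
      using m1S unfolding S_def fsq_def by blast
    ultimately obtain r where r: "0 < r" "r < m1" "fsq (int r * int p)"
      using descent[OF p] m1le m0p by (metis order_le_less_trans)
    hence "r \<in> S" unfolding S_def by auto
    hence "m1 \<le> r" unfolding m1_def by (rule Least_le)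
    thus False using r by simp
  qed
  thus ?thesis using m1S unfolding S_def by simp
qed

lemma fsq_all: "fsq (int n)"
proof (induction n rule: less_induct)
  case (less n)
  show ?case
  proof (cases "n \<le> 1")
    case True
    then have "n = 0 \<or> n = 1" by auto
    then show ?thesis unfolding fsq_def
    proof
      assume "n = 0" then show "\<exists>a b c d::int. int n = a^2+b^2+c^2+d^2"
        by (rule_tac x=0 in exI, rule_tac x=0 in exI, rule_tac x=0 in exI, rule_tac x=0 in exI) simp
    next
      assume "n = 1" then show "\<exists>a b c d::int. int n = a^2+b^2+c^2+d^2"
        by (rule_tac x=1 in exI, rule_tac x=0 in exI, rule_tac x=0 in exI, rule_tac x=0 in exI) simp
    qed
  next
    case False
    then obtain p where p: "prime p" "p dvd n" using prime_factor_nat[of n] by auto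
    then obtain k where k: "n = p * k" by blast
    have "p \<ge> 2" using p prime_ge_2_nat by blast
    moreover have "k > 0" using False k by (cases k) auto
    ultimately have "1*k < p*k" by (intro mult_strict_right_mono) auto
    hence "k < n" using k by simp
    then have "fsq (int k)" using less by blast
    moreover have "fsq (int p)" using prime_fsq p by blast
    ultimately show ?thesis using fsq_mult k by (metis of_nat_mult)
  qed
qed

lemma four_squares_nat: "\<exists>a b c d::nat. n = a^2+b^2+c^2+d^2"
proof -
  obtain a b c d :: int where e: "int n = a^2+b^2+c^2+d^2" using fsq_all[of n] unfolding fsq_def by blast
  have "int n = int (nat \<bar>a\<bar>^2 + nat \<bar>b\<bar>^2 + nat \<bar>c\<bar>^2 + nat \<bar>d\<bar>^2)"
    unfolding e by simp
  hence "n = nat \<bar>a\<bar>^2 + nat \<bar>b\<bar>^2 + nat \<bar>c\<bar>^2 + nat \<bar>d\<bar>^2" by (simp only: of_nat_eq_iff)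
  thus ?thesis by blast
qed




fun val :: "nat \<Rightarrow> nat list \<Rightarrow> nat" where
  "val B [] = 0"
| "val B (d # ds) = d + B * val B ds"

lemma digits_step: "B \<ge> 2 \<Longrightarrow> x > 0 \<Longrightarrow> digits B x = x mod B # digits B (x div B)"
  by (subst digits.simps) auto

lemma digits_0[simp]: "digits B 0 = []"
  by (subst digits.simps) auto

lemma val_digits: "B \<ge> 2 \<Longrightarrow> val B (digits B x) = x"
proof (induction x rule: less_induct)
  case (less x)
  show ?case
  proof (cases "x = 0")
    case True then show ?thesis by simp
  next
    case False
    have "x div B < x" using False less.prems by simp
    then show ?thesis using less False digits_step[OF less.prems, of x] by simp
  qed
qed

lemma digits_lt: "B \<ge> 2 \<Longrightarrow> d \<in> set (digits B x) \<Longrightarrow> d < B"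
proof (induction x rule: less_induct)
  case (less x)
  show ?case
  proof (cases "x = 0")
    case True then show ?thesis using less.prems by simp
  next
    case False
    have "x div B < x" using False less.prems by simp
    then show ?thesis using less.IH[of "x div B"] less.prems False digits_step[OF less.prems(1), of x] by auto
  qed
qed

lemma digits_len_lower: "B \<ge> 2 \<Longrightarrow> x > 0 \<Longrightarrow> B ^ (length (digits B x) - 1) \<le> x"
proof (induction x rule: less_induct)
  case (less x)
  have ds: "digits B x = x mod B # digits B (x div B)" using digits_step less.prems by blast
  show ?case
  proof (cases "x div B = 0")
    case True then show ?thesis using ds less.prems by simp
  next
    case False
    have "x div B < x" using less.prems by simp
    then have ih: "B ^ (length (digits B (x div B)) - 1) \<le> x div B" using less False by simp
    have ne: "digits B (x div B) \<noteq> []" using False digits_step[OF less.prems(1)] by simp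
    have "B ^ (length (digits B x) - 1) = B * B ^ (length (digits B (x div B)) - 1)"
      using ds ne by (cases "digits B (x div B)") auto
    also have "\<dots> \<le> B * (x div B)" using ih by simp
    also have "\<dots> \<le> x" by simp
    finally show ?thesis .
  qed
qed

lemma val_lt: "B \<ge> 2 \<Longrightarrow> \<forall>d\<in>set ds. d < B \<Longrightarrow> val B ds < B ^ length ds"
proof (induction ds)
  case Nil then show ?case by simp
next
  case (Cons d ds)
  then have v: "val B ds + 1 \<le> B ^ length ds" and dB: "d < B" by auto
  have "d + B * val B ds < B + B * val B ds" using dB by simp
  also have "\<dots> = B * (val B ds + 1)" by simp
  also have "\<dots> \<le> B * B ^ length ds" using v by (rule mult_le_mono2)
  finally show ?case by simp
qed

lemma H_val: "B \<ge> 2 \<Longrightarrow> \<forall>d\<in>set ds. d < B \<Longrightarrow> H B (val B ds) = (\<Sum>d\<leftarrow>ds. d^2)"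
proof (induction ds)
  case Nil then show ?case by (simp add: H_def)
next
  case (Cons d ds)
  then have ih: "H B (val B ds) = (\<Sum>d\<leftarrow>ds. d^2)" and dB: "d < B" by auto
  show ?case
  proof (cases "d + B * val B ds = 0")
    case True
    then have "d = 0" "val B ds = 0" using Cons.prems by auto
    then show ?thesis using ih by (simp add: H_def)
  next
    case False
    have m: "(d + B * val B ds) mod B = d" using dB by simp
    have dv: "(d + B * val B ds) div B = val B ds" using dB by simp
    have "digits B (d + B * val B ds) = d # digits B (val B ds)"
      using digits_step[OF Cons.prems(1) ] False m dv by simp
    then show ?thesis using ih by (simp add: H_def)
  qed
qed


lemma H_step: "B \<ge> 2 \<Longrightarrow> x > 0 \<Longrightarrow> H B x = (x mod B)^2 + H B (x div B)"
  by (simp add: H_def digits_step)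

lemma H_0[simp]: "H B 0 = 0" by (simp add: H_def)

lemma H_pos: "B \<ge> 2 \<Longrightarrow> x > 0 \<Longrightarrow> H B x > 0"
proof (induction x rule: less_induct)
  case (less x)
  show ?case
  proof (cases "x mod B = 0")
    case True
    have "x = B * (x div B)" using True mult_div_mod_eq[of B x] by simp
    then have "x div B > 0" using less.prems by (cases "x div B = 0") auto
    moreover have "x div B < x" using less.prems by simp
    ultimately have "H B (x div B) > 0" using less.IH less.prems by blast
    then show ?thesis using H_step[OF less.prems] by simp
  next
    case False
    then show ?thesis using H_step[OF less.prems] by simp
  qed
qed

lemma H_1: "B \<ge> 2 \<Longrightarrow> H B 1 = 1"
  using H_step[of B 1] by simp

lemma H_B: "B \<ge> 2 \<Longrightarrow> H B B = 1"
  using H_step[of B B] H_1 by simp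

lemma same_iter:
  assumes "x \<noteq> 1" "x' \<noteq> 1" "H B x' = H B x"
  shows "(H B ^^ a) x' = 1 \<longleftrightarrow> (H B ^^ a) x = 1"
  using assms by (cases a) (simp_all add: funpow_Suc_right del: funpow.simps)

lemma height_1: "height B 1 = 0"
  unfolding height_def by (rule Least_eq_0) simp

lemma exists_height:
  assumes B: "B \<ge> 2"
  shows "\<exists>x. x \<ge> 1 \<and> happy B x \<and> height B x = n"
proof (induction n)
  case 0
  have "happy B 1" unfolding happy_def by (auto intro: exI[of _ 0])
  then show ?case using height_1 by blast
next
  case (Suc k)
  then obtain y where y: "y \<ge> 1" "happy B y" "height B y = k" by blast
  obtain n0 where "(H B ^^ n0) y = 1" using y(2) unfolding happy_def by blast
  hence "(H B ^^ (LEAST a. (H B ^^ a) y = 1)) y = 1" by (rule LeastI)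
  hence Py: "(H B ^^ k) y = 1" using y(3) unfolding height_def by simp
  define x where "x = val B (0 # replicate y 1)"
  have dig: "\<forall>d\<in>set (0 # replicate y 1). d < B" using B by auto
  have Hx: "H B x = y" unfolding x_def using H_val[OF B dig] by (simp add: sum_list_replicate)
  have "replicate y (1::nat) = 1 # replicate (y - 1) 1" using y(1) by (cases y) auto
  hence "val B (replicate y 1) \<ge> 1" by simp
  hence xB: "x \<ge> B" unfolding x_def by simp
  hence x1: "x \<noteq> 1" using B by simp
  have P: "(H B ^^ Suc k) x = 1" using Py Hx by (simp add: funpow_Suc_right del: funpow.simps)
  have "height B x = Suc k" unfolding height_def
  proof (rule Least_equality)
    show "(H B ^^ Suc k) x = 1" by (rule P)
  next
    fix a assume a: "(H B ^^ a) x = 1"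
    show "Suc k \<le> a"
    proof (cases a)
      case 0 then show ?thesis using a x1 by simp
    next
      case (Suc a')
      then have "(H B ^^ a') y = 1" using a Hx by (simp add: funpow_Suc_right del: funpow.simps)
      then have "(LEAST a. (H B ^^ a) y = 1) \<le> a'" by (rule Least_le)
      then have "k \<le> a'" using y(3) unfolding height_def by simp
      then show ?thesis using Suc by simp
    qed
  qed
  moreover have "happy B x" unfolding happy_def
  proof
    show "0 < x" using xB B by simp
    show "\<exists>n. (H B ^^ n) x = 1" using P by blast
  qed
  moreover have "x \<ge> 1" using xB B by simp
  ultimately show ?case by blast
qed

lemma sq_bound:
  "\<forall>d\<in>set ds. d < B \<Longrightarrow> (\<Sum>d\<leftarrow>ds. d^2) \<le>
     length (filter (\<lambda>d. d < B - 1) ds) * (B-2)^2 + length (filter (\<lambda>d. \<not> d < B - 1) ds) * (B-1)^2"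
proof (induction ds)
  case Nil then show ?case by simp
next
  case (Cons d ds)
  then have ih: "(\<Sum>d\<leftarrow>ds. d^2) \<le>
     length (filter (\<lambda>d. d < B - 1) ds) * (B-2)^2 + length (filter (\<lambda>d. \<not> d < B - 1) ds) * (B-1)^2"
    and dB: "d < B" by auto
  show ?case
  proof (cases "d < B - 1")
    case True
    then have "d \<le> B - 2" by simp
    then have "d^2 \<le> (B-2)^2" by (rule power_mono) simp
    moreover have "(\<Sum>d\<leftarrow>d#ds. d^2) = d^2 + (\<Sum>d\<leftarrow>ds. d^2)" by simp
    moreover have "length (filter (\<lambda>d. d < B - 1) (d#ds)) = Suc (length (filter (\<lambda>d. d < B - 1) ds))"
      using True by simp
    moreover have "length (filter (\<lambda>d. \<not> d < B - 1) (d#ds)) = length (filter (\<lambda>d. \<not> d < B - 1) ds)"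
      using True by simp
    ultimately show ?thesis using ih by (simp only: mult_Suc; linarith)
  next
    case False
    then have "d \<le> B - 1" using dB by simp
    then have "d^2 \<le> (B-1)^2" by (rule power_mono) simp
    moreover have "(\<Sum>d\<leftarrow>d#ds. d^2) = d^2 + (\<Sum>d\<leftarrow>ds. d^2)" by simp
    moreover have "length (filter (\<lambda>d. d < B - 1) (d#ds)) = length (filter (\<lambda>d. d < B - 1) ds)"
      using False by simp
    moreover have "length (filter (\<lambda>d. \<not> d < B - 1) (d#ds)) = Suc (length (filter (\<lambda>d. \<not> d < B - 1) ds))"
      using False by simp
    ultimately show ?thesis using ih by (simp only: mult_Suc; linarith)
  qed
qed

lemma arith_key:
  fixes B k L Q m :: nat
  assumes B: "B \<ge> 2" and k: "2*B + 1 \<le> k" "k \<le> L"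
    and Q: "Q * (B-1)^2 \<le> m" and m: "m \<le> k * (B-2)^2 + (L - k) * (B-1)^2"
  shows "Q + 5 \<le> L"
proof (rule ccontr)
  assume "\<not> Q + 5 \<le> L"
  hence QL: "int L - 4 \<le> int Q" by simp
  define c where "c = int B - 1"
  have c1: "c \<ge> 1" using B unfolding c_def by simp
  have e1: "int (B - 1) = c" using B unfolding c_def by simp
  have e2: "int (B - 2) = c - 1" using B unfolding c_def by simp
  have e3: "int (L - k) = int L - int k" using k by simp
  have "int Q * c^2 \<le> int k * (c-1)^2 + (int L - int k) * c^2"
  proof -
    have "int (Q * (B-1)^2) \<le> int (k * (B-2)^2 + (L - k) * (B-1)^2)" using Q m by linarith
    thus ?thesis unfolding of_nat_add of_nat_mult of_nat_power e1 e2 e3 .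
  qed
  moreover have "(int L - 4) * c^2 \<le> int Q * c^2" using QL by (rule mult_right_mono) simp
  ultimately have "(int L - 4) * c^2 \<le> int k * (c-1)^2 + (int L - int k) * c^2" by linarith
  hence A: "int k * (2*c - 1) \<le> 4 * c^2" by (simp add: power2_eq_square algebra_simps)
  have "(2*c+3) * (2*c-1) \<le> int k * (2*c-1)"
    using k c1 unfolding c_def by (intro mult_right_mono) auto
  hence "(2*c+3) * (2*c-1) \<le> 4 * c^2" using A by linarith
  thus False using c1 by (simp add: power2_eq_square algebra_simps)
qed


lemma transfer_happy:
  assumes x1: "x \<noteq> 1" and x'1: "x' \<noteq> 1" and x'0: "x' \<ge> 1" and HH: "H B x' = H B x"
    and hx: "happy B x"
  shows "happy B x' \<and> height B x' = height B x"
proof -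
  have eq: "(\<lambda>a. (H B ^^ a) x' = 1) = (\<lambda>a. (H B ^^ a) x = 1)"
    using same_iter[OF x1 x'1 HH] by auto
  obtain n where "(H B ^^ n) x = 1" using hx unfolding happy_def by blast
  hence "(H B ^^ n) x' = 1" using same_iter[OF x1 x'1 HH] by simp
  hence "happy B x'" using x'0 unfolding happy_def by auto
  moreover have "height B x' = height B x" unfolding height_def eq ..
  ultimately show ?thesis by blast
qed

theorem corollary2p5:
  fixes B \<eta> :: nat
  assumes "B \<ge> 2"
  shows "alpha B (\<eta> + 1) \<le> 2 * B"
proof (rule ccontr)
  assume neg: "\<not> alpha B (\<eta> + 1) \<le> 2 * B"
  note B = assms
  define P where "P = (\<lambda>x. x \<ge> 1 \<and> happy B x \<and> height B x = \<eta> + 1)"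
  define x where "x = gamma B (\<eta> + 1)"
  have ex: "\<exists>x. P x" unfolding P_def using exists_height[OF B] by blast
  have Px: "P x" unfolding x_def gamma_def P_def[symmetric] using ex by (rule LeastI_ex)
  have minx: "\<And>x'. P x' \<Longrightarrow> x \<le> x'" unfolding x_def gamma_def P_def[symmetric]
    by (rule Least_le)
  have x0: "x > 0" and hx: "happy B x" and htx: "height B x = \<eta> + 1"
    using Px unfolding P_def by auto
  have x1: "x \<noteq> 1" using htx height_1 by auto
  define ds where "ds = digits B x"
  define L where "L = length ds"
  define k where "k = length (filter (\<lambda>d. d < B - 1) ds)"
  have kB: "2 * B + 1 \<le> k" using neg unfolding k_def ds_def x_def alpha_def by simp
  have kL: "k \<le> L" unfolding k_def L_def by simp
  have dsB: "\<forall>d\<in>set ds. d < B" using digits_lt[OF B] unfolding ds_def by blast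
  define m where "m = H B x"
  have m_eq: "m = (\<Sum>d\<leftarrow>ds. d^2)" unfolding m_def ds_def H_def ..
  have compl: "length (filter (\<lambda>d. \<not> d < B - 1) ds) = L - k"
    using sum_length_filter_compl[of "\<lambda>d. d < B - 1" ds] unfolding k_def L_def by simp
  have mb: "m \<le> k * (B-2)^2 + (L - k) * (B-1)^2"
    using sq_bound[OF dsB] unfolding m_eq compl k_def[symmetric] .
  define Q where "Q = m div (B-1)^2"
  define r where "r = m mod (B-1)^2"
  have c0: "(B-1)^2 > 0" using B by simp
  have mQr: "m = Q * (B-1)^2 + r" unfolding Q_def r_def by (rule div_mult_mod_eq[symmetric])
  have rlt: "r < (B-1)^2" unfolding r_def using c0 by simp
  have QL: "Q + 5 \<le> L" using arith_key[OF B kB kL _ mb] mQr by simp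
  obtain a b c e where r4: "r = a^2 + b^2 + c^2 + e^2" using four_squares_nat by blast
  have lt1: "z < B - 1" if "z^2 \<le> r" for z
  proof -
    have "z^2 < (B-1)^2" using that rlt by simp
    thus ?thesis by (simp add: power_less_imp_less_base)
  qed
  have abce: "a < B - 1" "b < B - 1" "c < B - 1" "e < B - 1"
    using lt1[of a] lt1[of b] lt1[of c] lt1[of e] r4 by simp_all
  define ds' where "ds' = [a, b, c, e] @ replicate Q (B - 1)"
  have ds'B: "\<forall>d\<in>set ds'. d < B" unfolding ds'_def using abce B by auto
  have Hds': "H B (val B ds') = m"
    using H_val[OF B ds'B] unfolding ds'_def mQr r4 by (simp add: sum_list_replicate)
  have len': "length ds' = Q + 4" unfolding ds'_def by simp
  have "val B ds' < B ^ (Q + 4)" using val_lt[OF B ds'B] len' by simp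
  also have "\<dots> \<le> B ^ (L - 1)" using QL B by (intro power_increasing) auto
  also have "\<dots> \<le> x" using digits_len_lower[OF B x0] unfolding L_def ds_def .
  finally have vlt: "val B ds' < x" .
  have mpos: "m > 0" unfolding m_def using H_pos[OF B x0] .
  obtain x' where x': "x' < x" "x' \<ge> 1" "x' \<noteq> 1" "H B x' = m"
  proof (cases "val B ds' \<le> 1")
    case True
    have "m = 1"
    proof (cases "val B ds' = 0")
      case True then show ?thesis using Hds' mpos by simp
    next
      case False
      then have "val B ds' = 1" using \<open>val B ds' \<le> 1\<close> by simp
      then show ?thesis using Hds' H_1[OF B] by simp
    qed
    moreover have "B < x"
    proof -
      have "B < B^2" using B by (simp add: power2_eq_square)
      also have "B^2 \<le> B ^ (L - 1)" using QL B by (intro power_increasing) auto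
      also have "\<dots> \<le> x" using digits_len_lower[OF B x0] unfolding L_def ds_def .
      finally show ?thesis .
    qed
    ultimately show ?thesis using that[of B] H_B[OF B] B by simp
  next
    case False
    then show ?thesis using that[of "val B ds'"] vlt Hds' by simp
  qed
  have "happy B x' \<and> height B x' = height B x"
    using transfer_happy[OF x1 x'(3) x'(2) _ hx] x'(4) m_def by simp
  hence "P x'" unfolding P_def using htx x'(2) by simp
  hence "x \<le> x'" by (rule minx)
  thus False using x'(1) by simp
qed


end
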